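(* Let $\alpha\in\mathbb{N}=\{0,1,2,\dots\}$ and let $m$ be a positive odd integer with $m>4\alpha+2$. Let $\mathbb{S}=\langle 4,4\alpha+2,m\rangle$. Then the set of Betti elements of $\mathbb{S}$ is $Betti(\mathbb{S})=\{8\alpha+4,\,2m\}$.
   Context: $\mathbb{N}$ denotes the set of nonnegative integers. For positive integers $a_1,\dots,a_e$ with $\gcd=1$, $\langle a_1,\dots,a_e\rangle=\{\lambda_1a_1+\dots+\lambda_ea_e:\lambda_i\in\mathbb{N}\}$ is a numerical semigroup. For $a\in\mathbb{S}$, the set of factorizations of $a$ with respect to the listed generators is $Z(a)=\{(\eta_1,\dots,\eta_e)\in\mathbb{N}^e:\eta_1a_1+\dots+\eta_ea_e=a\}$. For $x,y\in\mathbb{N}^e$, $\gcd\{x,y\}$ is the componentwise minimum. For $a\in\mathbb{S}\setminus\{0\}$, let $\nabla_a$ be the graph with vertex set $Z(a)$ in which $x,y$ are joined by an edge if $\gcd\{x,y\}\neq 0$. The element $a$ is a Betti element of $\mathbb{S}$ if $\nabla_a$ is disconnected; $Betti(\mathbb{S})$ denotes the set of Betti elements. *)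

theory Defs
  imports Main
begin

definition semigroup_gen :: "nat list \<Rightarrow> nat set" where
  "semigroup_gen gens = {a. \<exists>x::nat list. length x = length gens \<and>
                              (\<Sum>i<length gens. x ! i * gens ! i) = a}"

definition factorizations :: "nat list \<Rightarrow> nat \<Rightarrow> nat list set" where
  "factorizations gens a = {x. length x = length gens \<and>
                              (\<Sum>i<length gens. x ! i * gens ! i) = a}"

definition gcd_nonzero :: "nat list \<Rightarrow> nat list \<Rightarrow> bool" where
  "gcd_nonzero x y \<longleftrightarrow> (\<exists>i < min (length x) (length y). min (x ! i) (y ! i) \<noteq> 0)"

definition nabla_edges :: "nat list \<Rightarrow> nat \<Rightarrow> (nat list \<times> nat list) set" where
  "nabla_edges gens a = {(x, y). x \<in> factorizations gens a \<and> y \<in> factorizations gens a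
                                 \<and> gcd_nonzero x y}"

definition nabla_connected :: "nat list \<Rightarrow> nat \<Rightarrow> bool" where
  "nabla_connected gens a \<longleftrightarrow>
     (\<forall>x \<in> factorizations gens a. \<forall>y \<in> factorizations gens a.
        (x, y) \<in> (nabla_edges gens a)\<^sup>*)"

definition Betti :: "nat list \<Rightarrow> nat set" where
  "Betti gens = {a \<in> semigroup_gen gens. a \<noteq> 0 \<and> \<not> nabla_connected gens a}"

end

theory Submission
  imports Defs
begin

definition sh :: "nat \<Rightarrow> nat \<Rightarrow> nat \<Rightarrow> nat \<Rightarrow> nat \<Rightarrow> nat \<Rightarrow> bool" where
  "sh p q r p' q' r' \<longleftrightarrow> (p \<noteq> 0 \<and> p' \<noteq> 0) \<or> (q \<noteq> 0 \<and> q' \<noteq> 0) \<or> (r \<noteq> 0 \<and> r' \<noteq> 0)"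

definition conn :: "nat \<Rightarrow> nat \<Rightarrow> nat \<Rightarrow> nat \<Rightarrow> nat \<Rightarrow> nat \<Rightarrow> nat \<Rightarrow> nat \<Rightarrow> nat \<Rightarrow> bool" where
  "conn k d s p q r p' q' r' \<longleftrightarrow> (\<exists>a b c. 4*a+2*k*b+(k+2*d)*c = s \<and> sh p q r a b c \<and> sh a b c p' q' r')"

lemma conn_sym: "conn k d s p q r p' q' r' \<Longrightarrow> conn k d s p' q' r' p q r"
  unfolding conn_def sh_def by blast

lemma T1:
  assumes "odd k" "4*p = s" "2*k*q = s" "s \<noteq> 4*k" "p>0"
  shows "conn k d s p 0 0 0 q 0"
proof -
  have e: "2*p = k*q" using assms by simp
  hence "even (k*q)" by presburger
  with assms(1) obtain t where t: "q = 2*t" by auto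
  with e have pt: "p = k*t" by simp
  have "t \<noteq> 1" using assms pt by auto
  moreover have "t \<noteq> 0" using assms pt by auto
  ultimately have "t \<ge> 2" by arith
  then obtain t0 where t0: "t = t0+2" using le_Suc_ex[of 2 t] by auto
  have k0: "k > 0" using assms(1) by (cases k) auto
  show ?thesis unfolding conn_def sh_def
    apply (rule exI[of _ "k*(t0+1)"], rule exI[of _ 2], rule exI[of _ 0])
    using assms t pt t0 k0 by (auto simp: algebra_simps)
qed

lemma T2:
  assumes "odd k" "k < 2*d" "4*p = s" "(k+2*d)*r = s" "p>0"
  shows "conn k d s p 0 0 0 0 r"
proof -
  have "r \<noteq> 0"
  proof
    assume "r = 0" thus False using assms by simp
  qed
  moreover have "r \<noteq> 1"
  proof
    assume "r = 1" hence "4*p = k+2*d" using assms by simp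
    thus False using assms(1) by presburger
  qed
  moreover have "r \<noteq> 2"
  proof
    assume "r = 2" hence "2*p = k+2*d" using assms by simp
    thus False using assms(1) by presburger
  qed
  ultimately have "r \<ge> 3" by arith
  then obtain r0 where r0: "r = r0+3" using le_Suc_ex[of 3 r] by auto
  have d0: "d > 0" using assms by auto
  show ?thesis unfolding conn_def sh_def
    apply (rule exI[of _ d], rule exI[of _ 1], rule exI[of _ "r0+1"])
    using assms r0 d0 by (auto simp: algebra_simps)
qed

lemma T3:
  assumes "odd k" "k < 2*d" "2*k*q = s" "(k+2*d)*r = s" "q>0" "s \<noteq> 2*(k+2*d)"
  shows "conn k d s 0 q 0 0 0 r"
proof -
  have "even ((k+2*d)*r)" using assms(3,4) by (metis dvd_triv_left mult.assoc)
  hence ev: "even r" using assms(1) by simp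
  have "r \<noteq> 0"
  proof
    assume "r = 0" thus False using assms by simp
  qed
  moreover have "r \<noteq> 2" using assms by auto
  ultimately have "r \<ge> 3" using ev by presburger
  then obtain r0 where r0: "r = r0+3" using le_Suc_ex[of 3 r] by auto
  have d0: "d > 0" using assms by auto
  show ?thesis unfolding conn_def sh_def
    apply (rule exI[of _ d], rule exI[of _ 1], rule exI[of _ "r0+1"])
    using assms r0 d0 by (auto simp: algebra_simps)
qed

lemma T4:
  assumes "odd k" "k < 2*d" "4*p = s" "2*k*q+(k+2*d)*r = s" "p>0" "q>0" "r>0"
  shows "conn k d s p 0 0 0 q r"
proof (cases "q \<ge> 2")
  case True
  then obtain q0 where q0: "q = q0+2" using le_Suc_ex[of 2 q] by auto
  have k0: "k > 0" using assms(1) by (cases k) auto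
  show ?thesis unfolding conn_def sh_def
    apply (rule exI[of _ k], rule exI[of _ q0], rule exI[of _ r])
    using assms q0 k0 by (auto simp: algebra_simps)
next
  case False
  hence q1: "q = 1" using assms by arith
  have "r \<noteq> 1"
  proof
    assume "r = 1" hence "4*p = 2*k + k+2*d" using assms q1 by simp
    thus False using assms(1) by presburger
  qed
  hence "r \<ge> 2" using assms by arith
  then obtain r0 where r0: "r = r0+2" using le_Suc_ex[of 2 r] by auto
  have d0: "d > 0" using assms by auto
  show ?thesis unfolding conn_def sh_def
    apply (rule exI[of _ d], rule exI[of _ 2], rule exI[of _ r0])
    using assms r0 d0 q1 by (auto simp: algebra_simps)
qed

lemma T5:
  assumes "odd k" "k < 2*d" "2*k*q = s" "4*p+(k+2*d)*r = s" "p>0" "q>0" "r>0"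
  shows "conn k d s 0 q 0 p 0 r"
proof -
  have "even (4*p+(k+2*d)*r)" using assms(3,4) by (metis dvd_triv_left mult.assoc)
  hence "even ((k+2*d)*r)" by simp
  hence ev: "even r" using assms(1) by simp
  hence "r \<ge> 2" using assms by presburger
  hence "(k+2*d)*r \<ge> (k+2*d)*2" by (rule mult_le_mono2)
  hence "2*k*q > 4*k" using assms by simp
  hence "q > 2"
  proof (rule contrapos_pp)
    assume "\<not> q > 2"
    hence "q \<le> 2" by simp
    hence "2*k*q \<le> 2*k*2" by (rule mult_le_mono2)
    moreover have "2*k*2 = 4*k" by simp
    ultimately show "\<not> 2*k*q > 4*k" by linarith
  qed
  then obtain q0 where q0: "q = q0+3" using le_Suc_ex[of 3 q] by auto
  have k0: "k > 0" using assms(1) by (cases k) auto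
  show ?thesis unfolding conn_def sh_def
    apply (rule exI[of _ k], rule exI[of _ "q0+1"], rule exI[of _ 0])
    using assms q0 k0 by (auto simp: algebra_simps)
qed

lemma T6:
  assumes "odd k" "k < 2*d" "(k+2*d)*r = s" "4*p+2*k*q = s" "p>0" "q>0" "s \<noteq> 2*(k+2*d)"
  shows "conn k d s 0 0 r p q 0"
proof -
  have "even (4*p+2*k*q)" by simp
  hence "even ((k+2*d)*r)" using assms by simp
  hence ev: "even r" using assms(1) by simp
  have "r \<noteq> 0"
  proof
    assume "r = 0" thus False using assms by simp
  qed
  moreover have "r \<noteq> 2" using assms by auto
  ultimately have "r \<ge> 3" using ev by presburger
  then obtain r0 where r0: "r = r0+3" using le_Suc_ex[of 3 r] by auto
  have d0: "d > 0" using assms by auto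
  show ?thesis unfolding conn_def sh_def
    apply (rule exI[of _ d], rule exI[of _ 1], rule exI[of _ "r0+1"])
    using assms r0 d0 by (auto simp: algebra_simps)
qed

lemma MAIN:
  assumes k: "odd k" "k < 2*d" and s: "s \<noteq> 4*k" "s \<noteq> 2*(k+2*d)" "s \<noteq> 0"
    and x: "4*p+2*k*q+(k+2*d)*r = s" and y: "4*p'+2*k*q'+(k+2*d)*r' = s"
  shows "conn k d s p q r p' q' r'"
proof (cases "sh p q r p' q' r'")
  case True
  have "sh p q r p q r" using s x unfolding sh_def by auto
  thus ?thesis using True x unfolding conn_def by blast
next
  case False
  note F = False[unfolded sh_def]
  show ?thesis
  proof (cases "p = 0")
    case p: True
    show ?thesis
    proof (cases "q = 0")
      case q: True
      with p x s have r: "r > 0" by auto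
      with F have r': "r' = 0" by auto
      show ?thesis
      proof (cases "q' = 0")
        case True
        with r' y s have "p' > 0" by auto
        thus ?thesis using T2[OF k, of p' s r, THEN conn_sym] p q r' True x y by simp
      next
        case q': False
        show ?thesis
        proof (cases "p' = 0")
          case True
          thus ?thesis using T3[OF k, of q' s r, THEN conn_sym] p q r' q' x y s by simp
        next
          case False
          thus ?thesis using T6[OF k, of r s p' q'] p q r' q' x y s by simp
        qed
      qed
    next
      case q: False
      with F have q': "q' = 0" by auto
      show ?thesis
      proof (cases "r = 0")
        case r: True
        show ?thesis
        proof (cases "r' = 0")
          case True
          with q' y s have "p' > 0" by auto
          thus ?thesis using T1[OF k(1), of p' s q d, THEN conn_sym] p q r q' True x y s by simp
        next
          case r': False
          show ?thesis
          proof (cases "p' = 0")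
            case True
            thus ?thesis using T3[OF k, of q s r'] p q r q' r' x y s by simp
          next
            case False
            thus ?thesis using T5[OF k, of q s p' r'] p q r q' r' x y s by simp
          qed
        qed
      next
        case r: False
        with F have r': "r' = 0" by auto
        with q' y s have "p' > 0" by auto
        thus ?thesis using T4[OF k, of p' s q r, THEN conn_sym] p q r q' r' x y s by simp
      qed
    qed
  next
    case p: False
    with F have p': "p' = 0" by auto
    show ?thesis
    proof (cases "q = 0")
      case q: True
      show ?thesis
      proof (cases "r = 0")
        case r: True
        show ?thesis
        proof (cases "q' = 0")
          case q': True
          with p' y s have "r' > 0" by auto
          thus ?thesis using T2[OF k, of p s r'] p q r q' p' x y s by simp
        next
          case q': False
          show ?thesis
          proof (cases "r' = 0")
            case True
            thus ?thesis using T1[OF k(1), of p s q' d] p q r q' p' True x y s by simp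
          next
            case False
            thus ?thesis using T4[OF k, of p s q' r'] p q r q' p' False x y s by simp
          qed
        qed
      next
        case r: False
        with F have r': "r' = 0" by auto
        with p' y s have "q' > 0" by auto
        thus ?thesis using T5[OF k, of q' s p r, THEN conn_sym] p q r p' r' x y s by simp
      qed
    next
      case q: False
      with F have q': "q' = 0" by auto
      with p' y s have "r' > 0" by auto
      with F have r: "r = 0" by auto
      show ?thesis using T6[OF k, of r' s p q, THEN conn_sym] p q r p' q' \<open>r' > 0\<close> x y s by simp
    qed
  qed
qed

lemma len3: "length x = 3 \<Longrightarrow> x = [x!0, x!1, x!2]"
  by (cases x; cases "tl x"; cases "tl (tl x)") (auto simp: numeral_3_eq_3)

lemma fact_iff: "x \<in> factorizations [4,b,m] s \<longleftrightarrow> (\<exists>p q r. x = [p,q,r] \<and> 4*p+b*q+m*r = s)"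
proof
  assume "x \<in> factorizations [4,b,m] s"
  hence l0: "length x = length [4,b,m]" and e: "(\<Sum>i<length [4,b,m]. x ! i * [4,b,m] ! i) = s" unfolding factorizations_def by blast+
  from l0 have l: "length x = 3" by simp
  have "(\<Sum>i<length [4,b,m]. x ! i * [4,b,m] ! i) = x!0*4 + x!1*b + x!2*m" by (simp add: numeral_3_eq_3 numeral_2_eq_2 lessThan_Suc)
  with e have "x!0*4 + x!1*b + x!2*m = s" by simp
  hence "x = [x!0, x!1, x!2] \<and> 4*(x!0)+b*(x!1)+m*(x!2) = s" using len3[OF l] by (simp add: algebra_simps)
  thus "\<exists>p q r. x = [p,q,r] \<and> 4*p+b*q+m*r = s" by blast
next
  assume "\<exists>p q r. x = [p,q,r] \<and> 4*p+b*q+m*r = s"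
  then obtain p q r where "x = [p,q,r]" "4*p+b*q+m*r = s" by blast
  thus "x \<in> factorizations [4,b,m] s" unfolding factorizations_def
    by (simp add: numeral_3_eq_3 lessThan_Suc algebra_simps)
qed

lemma fact3: "[p,q,r] \<in> factorizations [4,b,m] s \<longleftrightarrow> 4*p+b*q+m*r = s"
  by (simp add: fact_iff)

lemma gcd3: "gcd_nonzero [p,q,r] [p',q',r'] \<longleftrightarrow> sh p q r p' q' r'"
  unfolding gcd_nonzero_def sh_def
  by (auto simp: numeral_3_eq_3 less_Suc_eq)

lemma sg_iff: "s \<in> semigroup_gen g \<longleftrightarrow> (\<exists>x. x \<in> factorizations g s)"
  unfolding semigroup_gen_def factorizations_def by auto

lemma connected_main:
  assumes k: "odd k" "k < 2*d" and s: "s \<noteq> 4*k" "s \<noteq> 2*(k+2*d)" "s \<noteq> 0"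
  shows "nabla_connected [4, 2*k, k+2*d] s"
  unfolding nabla_connected_def
proof (intro ballI)
  fix x y assume x: "x \<in> factorizations [4, 2*k, k+2*d] s" and y: "y \<in> factorizations [4, 2*k, k+2*d] s"
  from x obtain p q r where xp: "x = [p,q,r]" "4*p+2*k*q+(k+2*d)*r = s" by (auto simp: fact_iff)
  from y obtain p' q' r' where yp: "y = [p',q',r']" "4*p'+2*k*q'+(k+2*d)*r' = s" by (auto simp: fact_iff)
  from MAIN[OF k s xp(2) yp(2)] obtain a b c where
    w: "4*a+2*k*b+(k+2*d)*c = s" "sh p q r a b c" "sh a b c p' q' r'" unfolding conn_def by blast
  have wf: "[a,b,c] \<in> factorizations [4, 2*k, k+2*d] s" using w by (simp add: fact3)
  have "(x, [a,b,c]) \<in> nabla_edges [4, 2*k, k+2*d] s"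
    unfolding nabla_edges_def using x wf w xp by (simp add: gcd3)
  moreover have "([a,b,c], y) \<in> nabla_edges [4, 2*k, k+2*d] s"
    unfolding nabla_edges_def using y wf w yp by (simp add: gcd3)
  ultimately show "(x, y) \<in> (nabla_edges [4, 2*k, k+2*d] s)\<^sup>*" by auto
qed

lemma closed_set:
  assumes "(x, y) \<in> E\<^sup>*" "x \<in> A" "\<And>u v. u \<in> A \<Longrightarrow> (u, v) \<in> E \<Longrightarrow> v \<in> A"
  shows "y \<in> A"
  using assms(1,2) by (induction rule: rtrancl_induct) (auto intro: assms(3))

lemma not_conn_4k:
  assumes k: "odd k" "k < 2*d"
  shows "\<not> nabla_connected [4, 2*k, k+2*d] (4*k)"
proof
  let ?E = "nabla_edges [4, 2*k, k+2*d] (4*k)"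
  assume c: "nabla_connected [4, 2*k, k+2*d] (4*k)"
  have f1: "[k,0,0] \<in> factorizations [4, 2*k, k+2*d] (4*k)" by (simp add: fact3)
  have f2: "[0,2,0] \<in> factorizations [4, 2*k, k+2*d] (4*k)" by (simp add: fact3)
  have "(([k,0,0]::nat list), ([0,2,0]::nat list)) \<in> ?E\<^sup>*" using c f1 f2 unfolding nabla_connected_def by blast
  moreover have "[0,2,0] \<notin> {[k,0,0::nat]}" using k by auto
  moreover have "v \<in> {[k,0,0]}" if "u \<in> {[k,0,0]}" "(u,v) \<in> ?E" for u v
  proof -
    from that have "v \<in> factorizations [4, 2*k, k+2*d] (4*k)" and g: "gcd_nonzero [k,0,0] v"
      unfolding nabla_edges_def by auto
    then obtain p q r where v: "v = [p,q,r]" and e: "4*p+2*k*q+(k+2*d)*r = 4*k" by (auto simp: fact_iff)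
    from g v have p: "p > 0" by (simp add: gcd3 sh_def)
    have "even ((k+2*d)*r)"
    proof -
      have "(k+2*d)*r = 4*k - 4*p - 2*k*q" using e by linarith
      thus ?thesis by simp
    qed
    hence "even r" using k by simp
    have r0: "r = 0"
    proof (rule ccontr)
      assume "r \<noteq> 0" with \<open>even r\<close> have "r \<ge> 2" by presburger
      hence "(k+2*d)*r \<ge> (k+2*d)*2" by (rule mult_le_mono2)
      moreover have "(k+2*d)*2 = 2*k+4*d" by simp
      ultimately show False using e k by linarith
    qed
    with e have e2: "4*p+2*k*q = 4*k" by simp
    have q: "q < 2"
    proof (rule ccontr)
      assume "\<not> q < 2" hence "q \<ge> 2" by simp
      hence "2*k*q \<ge> 2*k*2" by (rule mult_le_mono2)
      thus False using e2 p by linarith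
    qed
    have "q \<noteq> 1"
    proof
      assume "q = 1" with e2 have "2*p = k" by simp
      thus False using k by presburger
    qed
    with q have "q = 0" by simp
    with e2 r0 v show ?thesis by simp
  qed
  ultimately show False using closed_set[of "[k,0,0]" "[0,2,0]" ?E "{[k,0,0]}"] by blast
qed

lemma not_conn_2m:
  assumes k: "odd k" "k < 2*d"
  shows "\<not> nabla_connected [4, 2*k, k+2*d] (2*(k+2*d))"
proof
  let ?s = "2*(k+2*d)"
  let ?Z = "factorizations [4, 2*k, k+2*d] ?s"
  let ?E = "nabla_edges [4, 2*k, k+2*d] ?s"
  let ?A = "{v. v \<in> ?Z \<and> v!2 = 0}"
  assume c: "nabla_connected [4, 2*k, k+2*d] ?s"
  have f1: "[d,1,0] \<in> ?Z" by (simp add: fact3)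
  have f2: "[0,0,2] \<in> ?Z" by (simp add: fact3)
  have "(([d,1,0]::nat list), ([0,0,2]::nat list)) \<in> ?E\<^sup>*" using c f1 f2 unfolding nabla_connected_def by blast
  moreover have "[0,0,2] \<notin> ?A" by simp
  moreover have "[d,1,0] \<in> ?A" using f1 by simp
  moreover have "v \<in> ?A" if "u \<in> ?A" "(u,v) \<in> ?E" for u v
  proof -
    from that have "u \<in> ?Z" "v \<in> ?Z" and g: "gcd_nonzero u v" and u2: "u!2 = 0"
      unfolding nabla_edges_def by auto
    then obtain p q r p' q' r' where u: "u = [p,q,r]" and v: "v = [p',q',r']"
      and e: "4*p'+2*k*q'+(k+2*d)*r' = ?s" by (auto simp: fact_iff)
    from u u2 have r: "r = 0" by simp
    from g u v r have pq: "p' \<noteq> 0 \<or> q' \<noteq> 0" by (auto simp: gcd3 sh_def)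
    have "even ((k+2*d)*r')"
    proof -
      have "(k+2*d)*r' = ?s - 4*p' - 2*k*q'" using e by linarith
      thus ?thesis by simp
    qed
    hence "even r'" using k by simp
    have r0: "r' = 0"
    proof (rule ccontr)
      assume "r' \<noteq> 0" with \<open>even r'\<close> have "r' \<ge> 2" by presburger
      hence "(k+2*d)*r' \<ge> (k+2*d)*2" by (rule mult_le_mono2)
      moreover have "(k+2*d)*2 = 2*k+4*d" by simp
      ultimately have "4*p'+2*k*q' = 0" using e by linarith
      thus False using pq k by (cases k) auto
    qed
    with that v show ?thesis unfolding nabla_edges_def by simp
  qed
  ultimately show False using closed_set[of "[d,1,0]" "[0,0,2]" ?E ?A] by blast
qed

lemma betti_kd:
  assumes k: "odd k" "k < 2*d"
  shows "Betti [4, 2*k, k+2*d] = {4*k, 2*(k+2*d)}"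
proof (rule set_eqI)
  fix s
  show "s \<in> Betti [4, 2*k, k+2*d] \<longleftrightarrow> s \<in> {4*k, 2*(k+2*d)}"
  proof
    assume "s \<in> Betti [4, 2*k, k+2*d]"
    hence "s \<noteq> 0" "\<not> nabla_connected [4, 2*k, k+2*d] s" unfolding Betti_def by auto
    thus "s \<in> {4*k, 2*(k+2*d)}" using connected_main[OF k, of s] by auto
  next
    have k0: "k > 0" using k by (cases k) auto
    assume "s \<in> {4*k, 2*(k+2*d)}"
    moreover have "4*k \<in> Betti [4, 2*k, k+2*d]"
      unfolding Betti_def using not_conn_4k[OF k] k0 sg_iff fact3[of k 0 0 "2*k" "k+2*d" "4*k"] by auto
    moreover have "2*(k+2*d) \<in> Betti [4, 2*k, k+2*d]"
      unfolding Betti_def using not_conn_2m[OF k] k0 sg_iff fact3[of 0 0 2 "2*k" "k+2*d" "2*(k+2*d)"] by auto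
    ultimately show "s \<in> Betti [4, 2*k, k+2*d]" by auto
  qed
qed

theorem theorem3:
  fixes \<alpha> m :: nat
  assumes "m > 0" and "odd m" and "m > 4 * \<alpha> + 2"
  shows "Betti [4, 4 * \<alpha> + 2, m] = {8 * \<alpha> + 4, 2 * m}"
proof -
  define k where "k = 2*\<alpha>+1"
  define d where "d = (m - k) div 2"
  have ok: "odd k" unfolding k_def by simp
  have md: "m = k + 2*d" unfolding d_def k_def using assms by presburger
  have kd: "k < 2*d" using assms md unfolding k_def by linarith
  have "Betti [4, 2*k, k+2*d] = {4*k, 2*(k+2*d)}" by (rule betti_kd[OF ok kd])
  moreover have "[4, 4*\<alpha>+2, m] = [4, 2*k, k+2*d]" using md unfolding k_def by simp
  moreover have "{8*\<alpha>+4, 2*m} = {4*k, 2*(k+2*d)}" using md unfolding k_def by (simp add: algebra_simps)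
  ultimately show ?thesis by simp
qed

end
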